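(* Let $n\ge3$ and let $x$ be a vertex of the Mobius ladder $M_{2n}$. Assign to $x$ a label $\ell\in\{1,2,\dots,\lceil n/2\rceil\}$. Then for every vertex $v$ covered by $x$ there exists a vertex $u$, also covered by $x$, such that $d(u,v)=2$.
   Context: For $n\ge2$, the Mobius ladder $M_{2n}$ has vertex set $\{x_1,\dots,x_{2n}\}$ and edge set $\{\{x_i,x_{i+1}\}:1\le i\le 2n\}\cup\{\{x_i,x_{i+n}\}:1\le i\le n\}$, subscripts modulo $2n$. $d$ denotes graph distance. A vertex $x$ carrying label $\ell$ covers exactly the vertices at distance $\ell$ from $x$. *)

theory Defs
  imports Main
begin

text \<open>Mobius ladder M_{2n}: vertices are 0,...,2n-1 (vertex x_i of the paper is i-1,
  indices taken modulo 2n). Edges: {i, i+1 mod 2n} and {i, i+n mod 2n}.\<close>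

definition mob_vert :: "nat \<Rightarrow> nat set" where
  "mob_vert n = {..<2*n}"

definition mob_adj :: "nat \<Rightarrow> nat \<Rightarrow> nat \<Rightarrow> bool" where
  "mob_adj n i j \<longleftrightarrow> i < 2*n \<and> j < 2*n \<and>
     (j = (i + 1) mod (2*n) \<or> i = (j + 1) mod (2*n) \<or>
      j = (i + n) mod (2*n) \<or> i = (j + n) mod (2*n))"

fun mob_walk :: "nat \<Rightarrow> nat \<Rightarrow> nat \<Rightarrow> nat \<Rightarrow> bool" where
  "mob_walk n 0 u v = (u = v)"
| "mob_walk n (Suc k) u v = (\<exists>w. mob_adj n u w \<and> mob_walk n k w v)"

text \<open>Graph distance (the graph is connected, so the least exists for vertices).\<close>
definition mob_dist :: "nat \<Rightarrow> nat \<Rightarrow> nat \<Rightarrow> nat" where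
  "mob_dist n u v = (LEAST k. mob_walk n k u v)"

definition mob_covers :: "nat \<Rightarrow> nat \<Rightarrow> nat \<Rightarrow> nat \<Rightarrow> bool" where
  "mob_covers n x l v \<longleftrightarrow> v \<in> mob_vert n \<and> mob_dist n x v = l"

end

theory Submission
  imports Defs
begin


definition Er :: "int \<Rightarrow> int \<Rightarrow> int" where
  "Er N r = min (min r (2*N - r)) (1 + \<bar>r - N\<bar>)"
definition E :: "int \<Rightarrow> int \<Rightarrow> int" where
  "E N d = Er N (if d < 0 then d + 2*N else d)"

lemma adj_int:
  assumes "mob_adj n i j"
  shows "i < 2*n \<and> j < 2*n \<and> (int j - int i \<in> {1, -1, 2*int n - 1, 1 - 2*int n, int n, - int n})"
proof -
  have i: "i < 2*n" and j: "j < 2*n" using assms unfolding mob_adj_def by auto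
  have A: "Suc a mod (2*n) = (if Suc a < 2*n then Suc a else 0)" if "a < 2*n" for a
    using that by (auto simp: mod_if)
  have B: "(a + n) mod (2*n) = (if a + n < 2*n then a+n else a - n)" if "a < 2*n" for a
  proof (cases "a + n < 2*n")
    case False
    then have "(a+n) mod (2*n) = (a + n - 2*n) mod (2*n)" by (simp add: mod_if)
    also have "\<dots> = a + n - 2*n" using that by simp
    finally show ?thesis using False by simp
  qed simp
  show ?thesis using assms i j unfolding mob_adj_def
    by (auto simp: A[OF i] A[OF j] B[OF i] B[OF j] split: if_splits)
qed

lemma lip:
  assumes "N \<ge> 1" "-2*N < d" "d < 2*N" "-2*N < d'" "d' < 2*N"
    "d' - d \<in> {1, -1, 2*N - 1, 1 - 2*N, N, - N}"
  shows "E N d' \<le> E N d + 1"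
  using assms unfolding E_def Er_def by (auto simp: min_def split: if_splits abs_split)

lemma walk_lower:
  "mob_walk n k u v \<Longrightarrow> u < 2*n \<Longrightarrow> v < 2*n \<Longrightarrow> E (int n) (int v - int u) \<le> int k"
proof (induction k arbitrary: u)
  case 0
  then show ?case by (simp add: E_def Er_def)
next
  case (Suc k)
  then obtain w where a: "mob_adj n u w" and w: "mob_walk n k w v" by auto
  from adj_int[OF a] have w2: "w < 2*n" and s: "int w - int u \<in> {1, -1, 2*int n - 1, 1 - 2*int n, int n, - int n}" by auto
  have IH: "E (int n) (int v - int w) \<le> int k" using Suc.IH[OF w w2 Suc.prems(3)] .
  have "n \<ge> 1" using Suc.prems by auto
  then have "E (int n) (int v - int u) \<le> E (int n) (int v - int w) + 1"
    apply (intro lip) using s Suc.prems w2 by auto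
  then show ?case using IH by simp
qed


lemma key:
  fixes N x v :: int
  assumes "N \<ge> 3" "0 \<le> x" "x < 2*N" "0 \<le> v" "v < 2*N"
    "1 \<le> E N (v - x)" "2 * E N (v - x) \<le> N + 1"
  shows "\<exists>u. 0 \<le> u \<and> u < 2*N \<and> E N (u - x) = E N (v - x) \<and> E N (v - u) = 2"
proof -
  define r where "r = (if v - x < 0 then v - x + 2*N else v - x)"
  have Ev: "E N (v - x) = Er N r" unfolding E_def r_def by simp
  show ?thesis
  proof (cases "r \<le> N")
    case True
    show ?thesis
    proof (cases "v + N - 1 < 2*N")
      case True
      show ?thesis apply (rule exI[of _ "v + N - 1"])
        using assms \<open>r \<le> N\<close> True unfolding Ev r_def E_def Er_def
        by (auto simp: min_def split: if_splits abs_split)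
    next
      case False
      show ?thesis apply (rule exI[of _ "v - N - 1"])
        using assms \<open>r \<le> N\<close> False unfolding Ev r_def E_def Er_def
        by (auto simp: min_def split: if_splits abs_split)
    qed
  next
    case False
    show ?thesis
    proof (cases "v + N + 1 < 2*N")
      case True
      show ?thesis apply (rule exI[of _ "v + N + 1"])
        using assms \<open>\<not> r \<le> N\<close> True unfolding Ev r_def E_def Er_def
        by (auto simp: min_def split: if_splits abs_split; presburger)
    next
      case False
      show ?thesis apply (rule exI[of _ "v - N + 1"])
        using assms \<open>\<not> r \<le> N\<close> False unfolding Ev r_def E_def Er_def
        by (auto simp: min_def split: if_splits abs_split; presburger)
    qed
  qed
qed


lemma walk_fwd:
  "u < 2*n \<Longrightarrow> v < 2*n \<Longrightarrow> int v = (int u + int m) mod (2*int n) \<Longrightarrow> mob_walk n m u v"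
proof (induction m arbitrary: u)
  case 0
  then show ?case by simp
next
  case (Suc m)
  define w where "w = (u + 1) mod (2*n)"
  have n0: "0 < n" using Suc.prems by auto
  have w2: "w < 2*n" unfolding w_def using n0 by simp
  have a: "mob_adj n u w" unfolding mob_adj_def w_def using Suc.prems w2 w_def by auto
  have iw: "int w = (int u + 1) mod (2*int n)" unfolding w_def by (simp add: zmod_int add.commute)
  have "(int w + int m) mod (2*int n) = ((int u + 1) + int m) mod (2*int n)"
    unfolding iw by (rule mod_add_left_eq)
  then have "int v = (int w + int m) mod (2*int n)"
    using Suc.prems(3) by (simp add: add_ac)
  then have "mob_walk n m w v" using Suc.IH w2 Suc.prems(2) by blast
  then show ?case using a by auto
qed

lemma walk_bwd:
  "u < 2*n \<Longrightarrow> v < 2*n \<Longrightarrow> int v = (int u - int m) mod (2*int n) \<Longrightarrow> mob_walk n m u v"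
proof (induction m arbitrary: u)
  case 0
  then show ?case by simp
next
  case (Suc m)
  define w where "w = (u + (2*n - 1)) mod (2*n)"
  have n0: "0 < n" using Suc.prems by auto
  have w2: "w < 2*n" unfolding w_def using n0 by simp
  have "(w + 1) mod (2*n) = (u + (2*n - 1) + 1) mod (2*n)" unfolding w_def
    by (simp add: mod_Suc_eq)
  also have "\<dots> = (u + 2*n) mod (2*n)" using n0 by simp
  also have "\<dots> = u" using Suc.prems by simp
  finally have a: "mob_adj n u w" unfolding mob_adj_def using Suc.prems w2 by auto
  have iw: "int w = (int u + 2*int n - 1) mod (2*int n)" unfolding w_def using n0
    by (simp add: zmod_int of_nat_diff)
  have "(int w - int m) mod (2*int n) = (int u + 2*int n - 1 - int m) mod (2*int n)"
    using iw by (simp add: mod_diff_left_eq)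
  also have "\<dots> = ((int u - int (Suc m)) + 1 * (2 * int n)) mod (2*int n)"
    by (simp add: algebra_simps)
  also have "\<dots> = (int u - int (Suc m)) mod (2 * int n)" by (rule mod_mult_self1)
  finally have "int v = (int w - int m) mod (2*int n)" using Suc.prems(3) by simp
  then have "mob_walk n m w v" using Suc.IH w2 Suc.prems(2) by blast
  then show ?case using a by auto
qed

lemma walk_upper:
  assumes "u < 2*n" "v < 2*n"
  shows "mob_walk n (nat (E (int n) (int v - int u))) u v"
proof -
  define N where "N = int n"
  define r where "r = (if int v - int u < 0 then int v - int u + 2*N else int v - int u)"
  have r0: "0 \<le> r" "r < 2*N" using assms unfolding r_def N_def by auto
  have Ev: "E N (int v - int u) = Er N r" unfolding E_def r_def by simp
  have vr: "int v = (int u + r) mod (2*N)"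
  proof (cases "int v - int u < 0")
    case True
    then have "int u + r = int v + 1 * (2*N)" unfolding r_def by simp
    then show ?thesis using assms N_def by simp
  next
    case False
    then have "int u + r = int v" unfolding r_def by simp
    then show ?thesis using assms N_def by simp
  qed
  consider "Er N r = r" | "Er N r = 2*N - r" | "Er N r = 1 + \<bar>r - N\<bar>"
    unfolding Er_def by (smt (verit) min_def)
  then show ?thesis
  proof cases
    case 1
    have "mob_walk n (nat r) u v" apply (rule walk_fwd) using assms vr r0 N_def by auto
    then show ?thesis using Ev 1 N_def by simp
  next
    case 2
    have "int u - int (nat (2*N - r)) = (int u + r) + (-1) * (2*N)" using r0 by simp
    then have "(int u - int (nat (2*N - r))) mod (2*N) = (int u + r) mod (2*N)"
      by (metis mod_mult_self1)
    then have "mob_walk n (nat (2*N - r)) u v" apply - apply (rule walk_bwd) using assms vr N_def by auto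
    then show ?thesis using Ev 2 N_def by simp
  next
    case 3
    define w where "w = (u + n) mod (2*n)"
    have n0: "0 < n" using assms by auto
    have w2: "w < 2*n" unfolding w_def using n0 by simp
    have a: "mob_adj n u w" unfolding mob_adj_def w_def using assms w2 w_def by auto
    have iw: "int w = (int u + N) mod (2*N)" unfolding w_def N_def by (simp add: zmod_int)
    have "mob_walk n (nat \<bar>r - N\<bar>) w v"
    proof (cases "r \<ge> N")
      case True
      have "(int w + int (nat \<bar>r - N\<bar>)) mod (2*N) = (int u + N + (r - N)) mod (2*N)"
        using iw True by (simp add: mod_add_left_eq)
      then show ?thesis apply - apply (rule walk_fwd) using assms vr w2 N_def by auto
    next
      case False
      have "(int w - int (nat \<bar>r - N\<bar>)) mod (2*N) = (int u + N - (N - r)) mod (2*N)"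
        using iw False by (simp add: mod_diff_left_eq)
      then show ?thesis apply - apply (rule walk_bwd) using assms vr w2 N_def by auto
    qed
    then have "mob_walk n (Suc (nat \<bar>r - N\<bar>)) u v" using a by auto
    moreover have "nat (E (int n) (int v - int u)) = Suc (nat \<bar>r - N\<bar>)" using Ev 3 N_def by simp
    ultimately show ?thesis by simp
  qed
qed


lemma dist_eq:
  assumes "u < 2*n" "v < 2*n"
  shows "mob_dist n u v = nat (E (int n) (int v - int u))"
  unfolding mob_dist_def
proof (rule Least_equality)
  show "mob_walk n (nat (E (int n) (int v - int u))) u v" by (rule walk_upper[OF assms])
next
  fix k assume "mob_walk n k u v"
  from walk_lower[OF this assms] show "nat (E (int n) (int v - int u)) \<le> k" by simp
qed


theorem lemma3p5:
  fixes n x l v :: nat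
  assumes "n \<ge> 3"
    and "x \<in> mob_vert n"
    and "1 \<le> l" and "l \<le> (n + 1) div 2"
    and "mob_covers n x l v"
  shows "\<exists>u. mob_covers n x l u \<and> mob_dist n u v = 2"
proof -
  have x2: "x < 2*n" using assms(2) by (simp add: mob_vert_def)
  have v2: "v < 2*n" and d: "mob_dist n x v = l" using assms(5) by (auto simp: mob_covers_def mob_vert_def)
  have "nat (E (int n) (int v - int x)) = l" using d dist_eq[OF x2 v2] by simp
  then have El: "E (int n) (int v - int x) = int l" using assms(3) by linarith
  have l2: "2 * int l \<le> int n + 1" using assms(4) by linarith
  obtain u where u: "0 \<le> u" "u < 2 * int n" "E (int n) (u - int x) = E (int n) (int v - int x)"
    "E (int n) (int v - u) = 2"
    using key[of "int n" "int x" "int v"] assms(1,3) x2 v2 El l2 by auto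
  define u' where "u' = nat u"
  have u'2: "u' < 2*n" and iu: "int u' = u" using u unfolding u'_def by auto
  have "mob_dist n x u' = l" using dist_eq[OF x2 u'2] iu u El by simp
  moreover have "mob_dist n u' v = 2" using dist_eq[OF u'2 v2] iu u by simp
  ultimately show ?thesis using u'2 by (auto simp: mob_covers_def mob_vert_def)
qed

end
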